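(* For each $d\in\mathbb Z$ there is a sequence of inclusions of PROPs $$\mathcal{DG}_1^\bullet\hookrightarrow\mathcal{DG}_2^\bullet\hookrightarrow\mathcal{DG}_3^\bullet\hookrightarrow\cdots\hookrightarrow\mathcal{DG}_\infty^\bullet.$$
   Context: $\mathcal{DG}_\infty^\bullet$ (depending on an integer $d$) is the graded vector space generated by pairs $(\gamma,\mathcal O)$, with $(\gamma,-\mathcal O)=-(\gamma,\mathcal O)$, where $\gamma$ is a finite directed graph with a cyclic ordering of the edges at each vertex; a vertex with $n$ outgoing edges is of type $n$; type $1$ vertices have at least two incoming edges; $\mathcal O$ is an orientation of the graded vector space spanned by the edges (degree $1$) and the vertices of type $n\ne0$ (degree $n(2-d)+(d-4)$). Inputs are the type $0$ vertices, outputs are the boundary components of the ribbon-graph thickening of $\gamma$; both are enumerated and there is at least one output. Grading: a nontrivial type $0$ vertex with $m$ incoming edges contributes $m-1$, a type $n\ge1$ vertex with $m$ incoming edges contributes $2n+m-2$. Differential: sum over all admissible graphs with the same number of type $0$ vertices which collapse along one edge to the given graph, oriented by replacing the expanded vertex (moved to the front of $\mathcal O$) by the new edge followed by the two new vertices in the order of the edge's direction. Composition: outputs of the first graph are identified with inputs of the second, and the edges at each input vertex of the second graph are attached to the corresponding output boundary cycle of the first graph in all possible ways compatible with cyclic orders; orientations are concatenated. This is a PROP. For $k=1,2,3,\dots$, $\mathcal{DG}_k^\bullet\subset\mathcal{DG}_\infty^\bullet$ is the subspace spanned by graphs all of whose vertices have type $\le k$. *)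

theory Defs
  imports Main "HOL-Library.Extended_Nat"
begin

section \<open>Directed ribbon graphs with enumerated inputs and outputs\<close>

text \<open>A half-edge (dart) is a pair (e, b):
  b = True is the tail end of e (at its source), b = False is the head end (at its target).
  The cyclic ordering of the (half-)edges at every vertex is given by the permutation rot
  (successor in the cyclic order). Boundary components of the ribbon-graph thickening are
  the orbits of the map h \<mapsto> rot (flip h) on darts, plus one component for each isolated
  vertex. The inputs are the type 0 vertices, enumerated by inp; the outputs are the boundary
  components, enumerated by outp. All data is extensional (fixed default values outside
  the relevant carriers), so that concrete graphs are determined by their structure.\<close>

type_synonym dart = "nat \<times> bool"

datatype bcomp = Cyc "dart set" | Iso nat

datatype gen = GE nat | GV nat

record rgraph =
  V :: "nat set"
  E :: "nat set"
  src :: "nat \<Rightarrow> nat"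
  tgt :: "nat \<Rightarrow> nat"
  rot :: "dart \<Rightarrow> dart"
  inp :: "nat \<Rightarrow> nat"
  outp :: "bcomp \<Rightarrow> nat"

definition darts :: "rgraph \<Rightarrow> dart set" where
  "darts G = E G \<times> UNIV"

definition dv :: "rgraph \<Rightarrow> dart \<Rightarrow> nat" where
  "dv G h = (if snd h then src G (fst h) else tgt G (fst h))"

definition flip :: "dart \<Rightarrow> dart" where
  "flip h = (fst h, \<not> snd h)"

definition outdeg :: "rgraph \<Rightarrow> nat \<Rightarrow> nat" where
  "outdeg G v = card {e \<in> E G. src G e = v}"

definition indeg :: "rgraph \<Rightarrow> nat \<Rightarrow> nat" where
  "indeg G v = card {e \<in> E G. tgt G e = v}"

text \<open>type of a vertex = number of outgoing edges; inputs = type 0 vertices\<close>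
definition inputs :: "rgraph \<Rightarrow> nat set" where
  "inputs G = {v \<in> V G. outdeg G v = 0}"

definition bphi :: "rgraph \<Rightarrow> dart \<Rightarrow> dart" where
  "bphi G h = rot G (flip h)"

definition orbit :: "('a \<Rightarrow> 'a) \<Rightarrow> 'a \<Rightarrow> 'a set" where
  "orbit f x = {(f ^^ n) x | n. True}"

definition bcs :: "rgraph \<Rightarrow> bcomp set" where
  "bcs G = {Cyc (orbit (bphi G) h) | h. h \<in> darts G}
         \<union> {Iso v | v. v \<in> V G \<and> (\<forall>h\<in>darts G. dv G h \<noteq> v)}"

definition wf_graph :: "rgraph \<Rightarrow> bool" where
  "wf_graph G \<longleftrightarrow>
     finite (V G) \<and> finite (E G) \<and>
     (\<forall>e\<in>E G. src G e \<in> V G \<and> tgt G e \<in> V G) \<and>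
     (\<forall>e. e \<notin> E G \<longrightarrow> src G e = 0 \<and> tgt G e = 0) \<and>
     bij_betw (rot G) (darts G) (darts G) \<and>
     (\<forall>h. h \<notin> darts G \<longrightarrow> rot G h = h) \<and>
     (\<forall>h\<in>darts G. dv G (rot G h) = dv G h) \<and>
     (\<forall>h\<in>darts G. \<forall>h'\<in>darts G. dv G h = dv G h' \<longrightarrow> (\<exists>n. (rot G ^^ n) h = h')) \<and>
     (\<forall>v\<in>V G. outdeg G v = 1 \<longrightarrow> indeg G v \<ge> 2) \<and>
     bij_betw (inp G) (inputs G) {..<card (inputs G)} \<and>
     (\<forall>v. v \<notin> inputs G \<longrightarrow> inp G v = 0) \<and>
     bcs G \<noteq> {} \<and>
     bij_betw (outp G) (bcs G) {..<card (bcs G)} \<and>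
     (\<forall>b. b \<notin> bcs G \<longrightarrow> outp G b = 0)"

section \<open>Orientations\<close>

text \<open>Generators of the graded vector space to be oriented: edges (degree 1) and
  vertices of type n \<noteq> 0 (degree n(2-d)+(d-4)). An orientation is represented by an ordering
  of these generators; reorderings change the orientation by the Koszul sign.\<close>

definition ogens :: "rgraph \<Rightarrow> gen set" where
  "ogens G = GE ` E G \<union> GV ` {v \<in> V G. outdeg G v \<noteq> 0}"

definition wf_or :: "rgraph \<Rightarrow> gen list \<Rightarrow> bool" where
  "wf_or G Or \<longleftrightarrow> distinct Or \<and> set Or = ogens G"

fun gdeg :: "int \<Rightarrow> rgraph \<Rightarrow> gen \<Rightarrow> int" where
  "gdeg d G (GE e) = 1"
| "gdeg d G (GV v) = int (outdeg G v) * (2 - d) + (d - 4)"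

type_synonym ograph = "rgraph \<times> gen list"

definition wf_og :: "int \<Rightarrow> ograph \<Rightarrow> bool" where
  "wf_og d x \<longleftrightarrow> wf_graph (fst x) \<and> wf_or (fst x) (snd x)"

definition before :: "'a list \<Rightarrow> 'a \<Rightarrow> 'a \<Rightarrow> bool" where
  "before xs a b \<longleftrightarrow> (\<exists>i j. i < j \<and> j < length xs \<and> xs ! i = a \<and> xs ! j = b)"

text \<open>Koszul sign exponent relating two orderings Or, Or' of the same generators:
  number of pairs of odd-degree generators whose relative order is swapped.\<close>
definition kinv :: "int \<Rightarrow> rgraph \<Rightarrow> gen list \<Rightarrow> gen list \<Rightarrow> nat" where
  "kinv d G Or Or' = card {(a, b). a \<in> set Or \<and> b \<in> set Or \<and> odd (gdeg d G a) \<and> odd (gdeg d G b)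
                                 \<and> before Or a b \<and> before Or' b a}"

section \<open>The free vector space and the relations\<close>

definition delta :: "'a \<Rightarrow> 'a \<Rightarrow> 'k::field" where
  "delta x = (\<lambda>y. if y = x then 1 else 0)"

definition lin_span :: "('a \<Rightarrow> 'k::field) set \<Rightarrow> ('a \<Rightarrow> 'k) set" where
  "lin_span S = {f. \<exists>T c. finite T \<and> T \<subseteq> S \<and> f = (\<lambda>y. \<Sum>g\<in>T. c g * g y)}"

definition gmap :: "(nat \<Rightarrow> nat) \<Rightarrow> (nat \<Rightarrow> nat) \<Rightarrow> gen \<Rightarrow> gen" where
  "gmap fv fe g = (case g of GE e \<Rightarrow> GE (fe e) | GV v \<Rightarrow> GV (fv v))"

definition dmap :: "(nat \<Rightarrow> nat) \<Rightarrow> dart \<Rightarrow> dart" where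
  "dmap fe h = (fe (fst h), snd h)"

fun bmap :: "(nat \<Rightarrow> nat) \<Rightarrow> (nat \<Rightarrow> nat) \<Rightarrow> bcomp \<Rightarrow> bcomp" where
  "bmap fv fe (Cyc C) = Cyc (dmap fe ` C)"
| "bmap fv fe (Iso v) = Iso (fv v)"

definition giso :: "rgraph \<Rightarrow> rgraph \<Rightarrow> (nat \<Rightarrow> nat) \<Rightarrow> (nat \<Rightarrow> nat) \<Rightarrow> bool" where
  "giso G G' fv fe \<longleftrightarrow>
     bij_betw fv (V G) (V G') \<and> bij_betw fe (E G) (E G') \<and>
     (\<forall>e\<in>E G. src G' (fe e) = fv (src G e) \<and> tgt G' (fe e) = fv (tgt G e)) \<and>
     (\<forall>h\<in>darts G. rot G' (dmap fe h) = dmap fe (rot G h)) \<and>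
     (\<forall>v\<in>inputs G. inp G' (fv v) = inp G v) \<and>
     (\<forall>b\<in>bcs G. outp G' (bmap fv fe b) = outp G b)"

text \<open>Relations: (\<gamma>, Or') = (Koszul sign) (\<gamma>, Or), and isomorphic oriented graphs are identified.\<close>
definition Rel :: "int \<Rightarrow> (ograph \<Rightarrow> 'k::field) set" where
  "Rel d = {(\<lambda>y. delta (G, Or') y - (-1) ^ kinv d G Or Or' * delta (G, Or) y) | G Or Or'.
              wf_og d (G, Or) \<and> wf_or G Or'}
         \<union> {(\<lambda>y. delta (G', map (gmap fv fe) Or) y - delta (G, Or) y) | G G' Or fv fe.
              wf_og d (G, Or) \<and> wf_graph G' \<and> giso G G' fv fe}"

definition typebound :: "enat \<Rightarrow> ograph \<Rightarrow> bool" where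
  "typebound k x \<longleftrightarrow> (\<forall>v\<in>V (fst x). enat (outdeg (fst x) v) \<le> k)"

text \<open>DGk d k is the preimage in the free vector space on oriented graphs of the subspace
  \<open>DG_k\<close> of \<open>DG_\<infinity>\<close> = free space / relations. For k = \<infinity> it is the whole of \<open>DG_\<infinity>\<close>.\<close>
definition DGk :: "int \<Rightarrow> enat \<Rightarrow> (ograph \<Rightarrow> 'k::field) set" where
  "DGk d k = lin_span ({delta x | x. wf_og d x \<and> typebound k x} \<union> Rel d)"

section \<open>The differential\<close>

definition freshn :: "nat set \<Rightarrow> nat" where
  "freshn S = Suc (Max (insert 0 S))"

definition vdarts :: "rgraph \<Rightarrow> nat \<Rightarrow> dart set" where
  "vdarts G v = {h \<in> darts G. dv G h = v}"

text \<open>Expansion of the vertex v = dv G h0: writing h_i = rot^i h0 for the darts at v in their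
  cyclic order (i < r), the darts h_0..h_(l-1) go to the new vertex a, the others to the new
  vertex b, and a new edge a \<rightarrow> b is inserted (its tail after h_(l-1) at a, its head after
  h_(r-1) at b). Every expansion of a vertex with respect to the cyclic structure arises for
  exactly one pair (h0, l) with 0 \<le> l \<le> r.\<close>
definition expand_graph :: "rgraph \<Rightarrow> dart \<Rightarrow> nat \<Rightarrow> rgraph" where
  "expand_graph G h0 l =
    (let v = dv G h0; r = card (vdarts G v); hs = (\<lambda>i. (rot G ^^ i) h0);
         I = {hs i | i. i < l}; e0 = freshn (E G); a = freshn (V G); b = Suc (freshn (V G));
         V' = (V G - {v}) \<union> {a, b}; E' = insert e0 (E G);
         src' = (\<lambda>e. if e = e0 then a else if e \<in> E G then
                     (if src G e = v then (if (e, True) \<in> I then a else b) else src G e) else 0);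
         tgt' = (\<lambda>e. if e = e0 then b else if e \<in> E G then
                     (if tgt G e = v then (if (e, False) \<in> I then a else b) else tgt G e) else 0);
         rot' = (\<lambda>h. if h = (e0, True) then (if l = 0 then (e0, True) else h0)
                   else if h = (e0, False) then (if l = r then (e0, False) else hs l)
                   else if h \<in> darts G then
                     (if dv G h = v \<and> 0 < l \<and> h = hs (l - 1) then (e0, True)
                      else if dv G h = v \<and> l < r \<and> h = hs (r - 1) then (e0, False)
                      else rot G h)
                   else h);
         G0 = \<lparr>V = V', E = E', src = src', tgt = tgt', rot = rot', inp = (\<lambda>_. 0), outp = (\<lambda>_. 0)\<rparr>;
         inp' = (\<lambda>w. if w \<in> inputs G0 then (if w \<in> V G - {v} then inp G w else inp G v) else 0);
         outp' = (\<lambda>c. if c \<in> bcs G0 then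
                    (case c of Cyc C \<Rightarrow> outp G (Cyc (orbit (bphi G) (SOME h. h \<in> C \<inter> darts G)))
                             | Iso w \<Rightarrow> outp G (Iso w))
                    else 0)
     in G0\<lparr>inp := inp', outp := outp'\<rparr>)"

text \<open>Orientation of the expansion: move the expanded vertex to the front (Koszul sign) and
  replace it by the new edge followed by the new vertices (source first), omitting a new
  vertex that is of type 0 (type 0 vertices are not oriented).\<close>
definition expand_or :: "rgraph \<Rightarrow> gen list \<Rightarrow> dart \<Rightarrow> nat \<Rightarrow> gen list" where
  "expand_or G Or h0 l =
    (let G' = expand_graph G h0 l; a = freshn (V G); b = Suc (freshn (V G)) in
      GE (freshn (E G)) # [GV w. w \<leftarrow> [a, b], outdeg G' w \<noteq> 0] @ removeAll (GV (dv G h0)) Or)"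

definition expand_sign_exp :: "int \<Rightarrow> rgraph \<Rightarrow> gen list \<Rightarrow> nat \<Rightarrow> nat" where
  "expand_sign_exp d G Or v =
    (if GV v \<in> set Or \<and> odd (gdeg d G (GV v))
     then card {g \<in> set Or. odd (gdeg d G g) \<and> before Or g (GV v)} else 0)"

definition admissible_exp :: "int \<Rightarrow> rgraph \<Rightarrow> gen list \<Rightarrow> dart \<Rightarrow> nat \<Rightarrow> bool" where
  "admissible_exp d G Or h0 l \<longleftrightarrow>
     wf_og d (expand_graph G h0 l, expand_or G Or h0 l) \<and>
     card (inputs (expand_graph G h0 l)) = card (inputs G)"

definition dbasis :: "int \<Rightarrow> ograph \<Rightarrow> ograph \<Rightarrow> 'k::field" where
  "dbasis d x = (\<lambda>y. \<Sum>p\<in>{(h0, l). h0 \<in> darts (fst x) \<and> l \<le> card (vdarts (fst x) (dv (fst x) h0))}.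
      if admissible_exp d (fst x) (snd x) (fst p) (snd p)
      then (-1) ^ expand_sign_exp d (fst x) (snd x) (dv (fst x) (fst p))
           * delta (expand_graph (fst x) (fst p) (snd p), expand_or (fst x) (snd x) (fst p) (snd p)) y
      else 0)"

section \<open>Vertical composition\<close>

definition shd :: "nat \<Rightarrow> dart \<Rightarrow> dart" where
  "shd s h = (fst h + s, snd h)"

definition shgen :: "nat \<Rightarrow> nat \<Rightarrow> gen \<Rightarrow> gen" where
  "shgen sv se g = gmap (\<lambda>w. w + sv) (\<lambda>e. e + se) g"

text \<open>G is one of the graphs obtained by gluing G2 on top of G1: the edges at the input
  vertex number j of G2 are attached to the output boundary cycle number j of G1, inserted into
  corners of that boundary cycle, so that their order along the boundary cycle is the cyclic
  order at the input vertex.\<close>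
definition vcomp_graph :: "rgraph \<Rightarrow> rgraph \<Rightarrow> rgraph \<Rightarrow> bool" where
  "vcomp_graph G1 G2 G \<longleftrightarrow>
    (let sv = freshn (V G1); se = freshn (E G1);
         A = {shd se y | y. y \<in> darts G2 \<and> dv G2 y \<in> inputs G2};
         W = (\<lambda>h. if h \<in> A then rot G h else rot G (flip h)) in
     card (bcs G1) = card (inputs G2) \<and>
     V G = V G1 \<union> (\<lambda>w. w + sv) ` (V G2 - inputs G2) \<and>
     E G = E G1 \<union> (\<lambda>e. e + se) ` E G2 \<and>
     (\<forall>e\<in>E G1. src G e = src G1 e \<and> tgt G e = tgt G1 e) \<and>
     (\<forall>e\<in>E G2. src G (e + se) = src G2 e + sv) \<and>
     (\<forall>e\<in>E G2. tgt G2 e \<notin> inputs G2 \<longrightarrow> tgt G (e + se) = tgt G2 e + sv) \<and>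
     (\<forall>e. e \<notin> E G \<longrightarrow> src G e = 0 \<and> tgt G e = 0) \<and>
     bij_betw (rot G) (darts G) (darts G) \<and>
     (\<forall>h. h \<notin> darts G \<longrightarrow> rot G h = h) \<and>
     (\<forall>h\<in>darts G. dv G (rot G h) = dv G h) \<and>
     (\<forall>y\<in>darts G2. dv G2 y \<notin> inputs G2 \<longrightarrow> rot G (shd se y) = shd se (rot G2 y)) \<and>
     (\<forall>z\<in>darts G1. \<exists>n. (rot G ^^ Suc n) z = rot G1 z \<and> (\<forall>m<n. (rot G ^^ Suc m) z \<in> A)) \<and>
     (\<forall>y\<in>darts G2. dv G2 y \<in> inputs G2 \<longrightarrow>
        (\<exists>n. (W ^^ Suc n) (shd se y) = shd se (rot G2 y) \<and> (\<forall>m<n. (W ^^ Suc m) (shd se y) \<notin> A)) \<and>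
        ((\<exists>z\<in>darts G1. outp G1 (Cyc (orbit (bphi G1) z)) = inp G2 (dv G2 y) \<and>
                        (\<exists>n. (W ^^ n) z = shd se y)) \<or>
         (\<exists>w. Iso w \<in> bcs G1 \<and> outp G1 (Iso w) = inp G2 (dv G2 y) \<and> dv G (shd se y) = w))) \<and>
     inp G = inp G1 \<and>
     (\<forall>c. outp G c =
        (if c \<in> bcs G then
          (case c of
             Cyc C \<Rightarrow>
               (if \<exists>y\<in>darts G2. shd se y \<in> C
                then outp G2 (Cyc (orbit (bphi G2) (SOME y. y \<in> darts G2 \<and> shd se y \<in> C)))
                else outp G2 (Iso (the_inv_into (inputs G2) (inp G2)
                        (outp G1 (Cyc (orbit (bphi G1) (SOME z. z \<in> C)))))))
           | Iso w \<Rightarrow> outp G2 (Iso (the_inv_into (inputs G2) (inp G2) (outp G1 (Iso w)))))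
         else 0)))"

definition vcomp :: "ograph \<Rightarrow> ograph \<Rightarrow> ograph \<Rightarrow> 'k::field" where
  "vcomp x1 x2 = (\<lambda>y. if vcomp_graph (fst x1) (fst x2) (fst y) \<and>
       snd y = snd x1 @ map (shgen (freshn (V (fst x1))) (freshn (E (fst x1)))) (snd x2)
     then 1 else 0)"

section \<open>Horizontal composition, symmetric group actions, identity\<close>

definition hcomp_graph :: "rgraph \<Rightarrow> rgraph \<Rightarrow> rgraph" where
  "hcomp_graph G1 G2 =
    (let sv = freshn (V G1); se = freshn (E G1);
         G0 = \<lparr>V = V G1 \<union> (\<lambda>w. w + sv) ` V G2,
               E = E G1 \<union> (\<lambda>e. e + se) ` E G2,
               src = (\<lambda>e. if e \<in> E G1 then src G1 e else if e \<ge> se \<and> e - se \<in> E G2 then src G2 (e - se) + sv else 0),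
               tgt = (\<lambda>e. if e \<in> E G1 then tgt G1 e else if e \<ge> se \<and> e - se \<in> E G2 then tgt G2 (e - se) + sv else 0),
               rot = (\<lambda>h. if h \<in> darts G1 then rot G1 h
                          else if fst h \<ge> se \<and> (fst h - se, snd h) \<in> darts G2
                          then shd se (rot G2 (fst h - se, snd h)) else h),
               inp = (\<lambda>_. 0), outp = (\<lambda>_. 0)\<rparr>
     in G0\<lparr>inp := (\<lambda>w. if w \<in> inputs G1 then inp G1 w
                       else if w \<ge> sv \<and> w - sv \<in> inputs G2 then inp G2 (w - sv) + card (inputs G1)
                       else 0),
           outp := (\<lambda>c. if c \<in> bcs G0 then
                     (case c of
                        Cyc C \<Rightarrow> (if C \<subseteq> darts G1 then outp G1 (Cyc C)
                                  else outp G2 (Cyc ((\<lambda>h. (fst h - se, snd h)) ` C)) + card (bcs G1))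
                      | Iso w \<Rightarrow> (if w \<in> V G1 then outp G1 (Iso w)
                                  else outp G2 (Iso (w - sv)) + card (bcs G1)))
                     else 0)\<rparr>)"

definition hcomp :: "ograph \<Rightarrow> ograph \<Rightarrow> ograph" where
  "hcomp x1 x2 = (hcomp_graph (fst x1) (fst x2),
      snd x1 @ map (shgen (freshn (V (fst x1))) (freshn (E (fst x1)))) (snd x2))"

definition relabel :: "(nat \<Rightarrow> nat) \<Rightarrow> (nat \<Rightarrow> nat) \<Rightarrow> ograph \<Rightarrow> ograph" where
  "relabel \<sigma> \<tau> x = ((fst x)\<lparr>inp := (\<lambda>v. if v \<in> inputs (fst x) then \<sigma> (inp (fst x) v) else 0),
                             outp := (\<lambda>c. if c \<in> bcs (fst x) then \<tau> (outp (fst x) c) else 0)\<rparr>,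
                      snd x)"

definition idgraph :: ograph where
  "idgraph = (\<lparr>V = {0}, E = {}, src = (\<lambda>_. 0), tgt = (\<lambda>_. 0), rot = (\<lambda>h. h),
               inp = (\<lambda>_. 0), outp = (\<lambda>_. 0)\<rparr>, [])"

end

theory Submission
  imports Defs
begin


lemma lin_span_mono: "S \<subseteq> S' \<Longrightarrow> lin_span S \<subseteq> lin_span S'"
  unfolding lin_span_def by blast

lemma lin_span_zero: "(\<lambda>y. 0) \<in> lin_span S"
  unfolding lin_span_def by (rule CollectI, rule exI[of _ "{}"]) auto

lemma lin_span_base: "g \<in> S \<Longrightarrow> g \<in> lin_span S"
  unfolding lin_span_def by (rule CollectI, rule exI[of _ "{g}"], rule exI[of _ "\<lambda>_. 1"]) auto

lemma lin_span_add:
  assumes "f1 \<in> lin_span S" "f2 \<in> lin_span S"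
  shows "(\<lambda>y. f1 y + f2 y) \<in> lin_span S"
proof -
  obtain T1 c1 where t1: "finite T1" "T1 \<subseteq> S" "f1 = (\<lambda>y. \<Sum>g\<in>T1. c1 g * g y)"
    using assms(1) unfolding lin_span_def by blast
  obtain T2 c2 where t2: "finite T2" "T2 \<subseteq> S" "f2 = (\<lambda>y. \<Sum>g\<in>T2. c2 g * g y)"
    using assms(2) unfolding lin_span_def by blast
  define c where "c g = (if g \<in> T1 then c1 g else 0) + (if g \<in> T2 then c2 g else 0)" for g
  have "(\<lambda>y. f1 y + f2 y) = (\<lambda>y. \<Sum>g\<in>T1 \<union> T2. c g * g y)"
  proof
    fix y
    have fin: "finite (T1 \<union> T2)" using t1 t2 by auto
    have "(\<Sum>g\<in>T1 \<union> T2. c g * g y) = (\<Sum>g\<in>T1 \<union> T2. (if g \<in> T1 then c1 g * g y else 0))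
           + (\<Sum>g\<in>T1 \<union> T2. (if g \<in> T2 then c2 g * g y else 0))"
      unfolding sum.distrib[symmetric] by (rule sum.cong) (auto simp: c_def distrib_right)
    also have "\<dots> = f1 y + f2 y"
      using sum.inter_restrict[OF fin, of "\<lambda>g. c1 g * g y" T1] sum.inter_restrict[OF fin, of "\<lambda>g. c2 g * g y" T2] t1 t2
      by (simp add: Int_absorb1 Int_commute)
    finally show "f1 y + f2 y = (\<Sum>g\<in>T1 \<union> T2. c g * g y)" by simp
  qed
  then show ?thesis unfolding lin_span_def
    by (intro CollectI exI[of _ "T1 \<union> T2"] exI[of _ c]) (use t1 t2 in blast)
qed

lemma lin_span_smult:
  assumes "f \<in> lin_span S" shows "(\<lambda>y. a * f y) \<in> lin_span S"
proof -
  obtain T c where t: "finite T" "T \<subseteq> S" "f = (\<lambda>y. \<Sum>g\<in>T. c g * g y)"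
    using assms unfolding lin_span_def by blast
  have e: "(\<lambda>y. a * f y) = (\<lambda>y. \<Sum>g\<in>T. (a * c g) * g y)"
    unfolding t(3) sum_distrib_left by (simp only: mult.assoc)
  show ?thesis unfolding lin_span_def
    by (rule CollectI, rule exI[of _ T], rule exI[of _ "\<lambda>g. a * c g"]) (use t e in blast)
qed

lemma lin_span_sum:
  assumes "finite T" "\<forall>g\<in>T. h g \<in> lin_span S"
  shows "(\<lambda>y. \<Sum>g\<in>T. c g * h g y) \<in> lin_span S"
  using assms
proof (induction T rule: finite_induct)
  case empty then show ?case using lin_span_zero by simp
next
  case (insert x F)
  have "(\<lambda>y. (\<lambda>y. c x * h x y) y + (\<lambda>y. \<Sum>g\<in>F. c g * h g y) y) \<in> lin_span S"
    using insert by (intro lin_span_add lin_span_smult) auto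
  then show ?case using insert by simp
qed


lemma wfD: "wf_graph G \<Longrightarrow> finite (V G) \<and> finite (E G) \<and> (\<forall>e\<in>E G. src G e \<in> V G \<and> tgt G e \<in> V G)"
  by (simp add: wf_graph_def)

lemma freshn_gt: "finite S \<Longrightarrow> x \<in> S \<Longrightarrow> x < freshn S"
  unfolding freshn_def by (simp add: le_imp_less_Suc)

lemma freshn_notin: "finite S \<Longrightarrow> freshn S \<notin> S"
  using freshn_gt by blast

lemma giso_outdeg:
  assumes wf: "wf_graph G" and gi: "giso G G' fv fe" and v: "v \<in> V G"
  shows "outdeg G' (fv v) = outdeg G v"
proof -
  have bv: "bij_betw fv (V G) (V G')" and be: "bij_betw fe (E G) (E G')"
    and sr: "\<forall>e\<in>E G. src G' (fe e) = fv (src G e)" using gi unfolding giso_def by auto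
  have srcV: "\<forall>e\<in>E G. src G e \<in> V G" using wfD[OF wf] by blast
  have "{e'\<in>E G'. src G' e' = fv v} = fe ` {e \<in> E G. src G e = v}"
  proof
    show "fe ` {e \<in> E G. src G e = v} \<subseteq> {e'\<in>E G'. src G' e' = fv v}"
      using sr bij_betw_apply[OF be] by auto
  next
    show "{e'\<in>E G'. src G' e' = fv v} \<subseteq> fe ` {e \<in> E G. src G e = v}"
    proof
      fix e' assume e': "e' \<in> {e'\<in>E G'. src G' e' = fv v}"
      then obtain e where e: "e \<in> E G" "e' = fe e"
        using bij_betw_imp_surj_on[OF be] by blast
      have "fv (src G e) = fv v" using e e' sr by auto
      then have "src G e = v" using bij_betw_imp_inj_on[OF bv] srcV e v by (auto dest: inj_onD)
      then show "e' \<in> fe ` {e \<in> E G. src G e = v}" using e by auto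
    qed
  qed
  moreover have "inj_on fe {e \<in> E G. src G e = v}"
    using bij_betw_imp_inj_on[OF be] by (rule inj_on_subset) auto
  ultimately show ?thesis unfolding outdeg_def by (simp add: card_image)
qed

lemma giso_tb:
  assumes wf: "wf_graph G" and gi: "giso G G' fv fe"
  shows "typebound k (G', Or') = typebound k (G, Or)"
proof -
  have "V G' = fv ` V G" using gi unfolding giso_def by (simp add: bij_betw_def)
  then show ?thesis unfolding typebound_def using giso_outdeg[OF wf gi] by auto
qed

definition tbp :: "enat \<Rightarrow> (ograph \<Rightarrow> 'k::field) \<Rightarrow> ograph \<Rightarrow> 'k" where
  "tbp k f = (\<lambda>y. if typebound k y then f y else 0)"

lemma tbp_id: "(\<forall>y. g y \<noteq> 0 \<longrightarrow> typebound k y) \<Longrightarrow> tbp k g = g"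
  unfolding tbp_def by (rule ext) auto

lemma tbp_zero: "(\<forall>y. g y \<noteq> 0 \<longrightarrow> \<not> typebound k y) \<Longrightarrow> tbp k g = (\<lambda>y. 0)"
  unfolding tbp_def by (rule ext) auto

lemma delta_nz: "delta x y \<noteq> 0 \<Longrightarrow> y = x"
  unfolding delta_def by (auto split: if_splits)

lemma tbp_gen:
  assumes "g \<in> {delta x | x. wf_og d x \<and> typebound \<infinity> x} \<union> Rel d"
  shows "tbp k g \<in> DGk d k"
proof -
  let ?S = "{delta x | x. wf_og d x \<and> typebound k x} \<union> (Rel d :: (ograph \<Rightarrow> 'a) set)"
  have z: "(\<lambda>y. 0) \<in> lin_span ?S" by (rule lin_span_zero)
  consider (D) x where "g = delta x" "wf_og d x"
    | (R) "g \<in> Rel d" using assms by blast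
  then show ?thesis
  proof cases
    case D
    show ?thesis
    proof (cases "typebound k x")
      case True
      have "tbp k g = g" using D True by (intro tbp_id) (auto dest: delta_nz)
      moreover have "g \<in> ?S" unfolding D(1) using D True by (intro UnI1 CollectI exI[of _ x]) simp
      ultimately show ?thesis unfolding DGk_def by (auto intro: lin_span_base)
    next
      case False
      have "tbp k g = (\<lambda>y. 0)" using D False by (intro tbp_zero) (auto dest: delta_nz)
      then show ?thesis unfolding DGk_def using z by simp
    qed
  next
    case R
    then have gS: "g \<in> lin_span ?S" by (auto intro: lin_span_base)
    from R consider (c1) G Or Or' where "g = (\<lambda>y. delta (G, Or') y - (-1) ^ kinv d G Or Or' * delta (G, Or) y)"
        "wf_og d (G, Or)"
      | (c2) G G' Or fv fe where "g = (\<lambda>y. delta (G', map (gmap fv fe) Or) y - delta (G, Or) y)"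
        "wf_og d (G, Or)" "wf_graph G'" "giso G G' fv fe"
      unfolding Rel_def by blast
    then show ?thesis
    proof cases
      case (c1 G Or Or')
      have tbe: "typebound k (G, Or') = typebound k (G, Or)" unfolding typebound_def by simp
      show ?thesis
      proof (cases "typebound k (G, Or)")
        case True
        have "tbp k g = g" using c1 True tbe by (intro tbp_id) (auto simp: delta_def)
        then show ?thesis unfolding DGk_def using gS by simp
      next
        case False
        have "tbp k g = (\<lambda>y. 0)" using c1 False tbe by (intro tbp_zero) (auto simp: delta_def)
        then show ?thesis unfolding DGk_def using z by simp
      qed
    next
      case (c2 G G' Or fv fe)
      have wf: "wf_graph G" using c2 unfolding wf_og_def by simp
      have tbe: "typebound k (G', map (gmap fv fe) Or) = typebound k (G, Or)"
        using giso_tb[OF wf c2(4)] by blast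
      show ?thesis
      proof (cases "typebound k (G, Or)")
        case True
        have "tbp k g = g" using c2 True tbe by (intro tbp_id) (auto simp: delta_def)
        then show ?thesis unfolding DGk_def using gS by simp
      next
        case False
        have "tbp k g = (\<lambda>y. 0)" using c2 False tbe by (intro tbp_zero) (auto simp: delta_def)
        then show ?thesis unfolding DGk_def using z by simp
      qed
    qed
  qed
qed

lemma tbp_DG:
  assumes "f \<in> DGk d \<infinity>" shows "tbp k f \<in> DGk d k"
proof -
  obtain T c where t: "finite T" "T \<subseteq> {delta x | x. wf_og d x \<and> typebound \<infinity> x} \<union> Rel d"
     "f = (\<lambda>y. \<Sum>g\<in>T. c g * g y)"
    using assms unfolding DGk_def lin_span_def by blast
  have all: "\<forall>g\<in>T. tbp k g \<in> DGk d k" using t(2) tbp_gen by blast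
  have "tbp k f = (\<lambda>y. \<Sum>g\<in>T. c g * tbp k g y)"
    unfolding t(3) tbp_def by (rule ext) auto
  also have "\<dots> \<in> DGk d k" unfolding DGk_def
    using t(1) all[unfolded DGk_def] by (intro lin_span_sum) auto
  finally show ?thesis .
qed


lemma glue_tb:
  assumes w1: "wf_graph G1" and w2: "wf_graph G2"
    and t1: "typebound k (G1, o1)" and t2: "typebound k (G2, o2)"
    and hV: "V G \<subseteq> V G1 \<union> (\<lambda>w. w + freshn (V G1)) ` V G2"
    and hE: "E G = E G1 \<union> (\<lambda>e. e + freshn (E G1)) ` E G2"
    and hs1: "\<forall>e\<in>E G1. src G e = src G1 e"
    and hs2: "\<forall>e\<in>E G2. src G (e + freshn (E G1)) = src G2 e + freshn (V G1)"
  shows "typebound k (G, oo)"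
proof -
  define sv where "sv = freshn (V G1)"
  define se where "se = freshn (E G1)"
  have f1: "finite (V G1)" "\<forall>e\<in>E G1. src G1 e \<in> V G1" using wfD[OF w1] by auto
  have lt: "\<And>x. x \<in> V G1 \<Longrightarrow> x < sv" unfolding sv_def using freshn_gt f1 by blast
  have "enat (outdeg G v) \<le> k" if v: "v \<in> V G" for v
  proof -
    consider "v \<in> V G1" | w where "w \<in> V G2" "v = w + sv" using v hV unfolding sv_def by blast
    then show ?thesis
    proof cases
      case 1
      have "{e \<in> E G. src G e = v} = {e \<in> E G1. src G1 e = v}"
        using hE hs1 hs2 1 lt unfolding se_def[symmetric] sv_def[symmetric] by force
      then have "outdeg G v = outdeg G1 v" unfolding outdeg_def by simp
      then show ?thesis using t1 1 unfolding typebound_def by simp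
    next
      case 2
      have "{e \<in> E G. src G e = v} = (\<lambda>e. e + se) ` {e \<in> E G2. src G2 e = w}"
      proof
        show "{e \<in> E G. src G e = v} \<subseteq> (\<lambda>e. e + se) ` {e \<in> E G2. src G2 e = w}"
        proof
          fix e assume e: "e \<in> {e \<in> E G. src G e = v}"
          show "e \<in> (\<lambda>e. e + se) ` {e \<in> E G2. src G2 e = w}"
          proof (cases "e \<in> E G1")
            case True
            then have "src G e \<in> V G1" using hs1 f1 by auto
            then show ?thesis using e lt 2 by fastforce
          next
            case False
            then obtain e2 where "e2 \<in> E G2" "e = e2 + se" using e hE unfolding se_def by blast
            then show ?thesis using e hs2 2 unfolding se_def[symmetric] sv_def[symmetric] by auto
          qed
        qed
      next
        show "(\<lambda>e. e + se) ` {e \<in> E G2. src G2 e = w} \<subseteq> {e \<in> E G. src G e = v}"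
          using hE hs2 2 unfolding se_def[symmetric] sv_def[symmetric] by auto
      qed
      then have "outdeg G v = outdeg G2 w" unfolding outdeg_def
        by (simp add: card_image inj_on_def)
      then show ?thesis using t2 2 unfolding typebound_def by simp
    qed
  qed
  then show ?thesis unfolding typebound_def by simp
qed

lemma vcomp_tb:
  assumes w1: "wf_graph G1" and w2: "wf_graph G2"
    and t1: "typebound k (G1, o1)" and t2: "typebound k (G2, o2)"
    and vg: "vcomp_graph G1 G2 G"
  shows "typebound k (G, oo)"
proof -
  have f: "V G = V G1 \<union> (\<lambda>w. w + freshn (V G1)) ` (V G2 - inputs G2)"
    "E G = E G1 \<union> (\<lambda>e. e + freshn (E G1)) ` E G2"
    "\<forall>e\<in>E G1. src G e = src G1 e"
    "\<forall>e\<in>E G2. src G (e + freshn (E G1)) = src G2 e + freshn (V G1)"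
    using vg unfolding vcomp_graph_def Let_def
    apply -
       apply (drule conjunct2, drule conjunct1, assumption)
      apply (drule conjunct2, drule conjunct2, drule conjunct1, assumption)
     apply (drule conjunct2, drule conjunct2, drule conjunct2, drule conjunct1, blast)
    apply (drule conjunct2, drule conjunct2, drule conjunct2, drule conjunct2, drule conjunct1, assumption)
    done
  show ?thesis by (rule glue_tb[OF w1 w2 t1 t2 _ f(2) f(3) f(4)]) (unfold f(1), blast)
qed

lemma hcomp_fields:
  "V (hcomp_graph G1 G2) = V G1 \<union> (\<lambda>w. w + freshn (V G1)) ` V G2"
  "E (hcomp_graph G1 G2) = E G1 \<union> (\<lambda>e. e + freshn (E G1)) ` E G2"
  "src (hcomp_graph G1 G2) = (\<lambda>e. if e \<in> E G1 then src G1 e else if e \<ge> freshn (E G1) \<and> e - freshn (E G1) \<in> E G2 then src G2 (e - freshn (E G1)) + freshn (V G1) else 0)"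
  by (simp only: hcomp_graph_def Let_def rgraph.simps)+

lemma hcomp_tb:
  assumes w1: "wf_graph G1" and w2: "wf_graph G2"
    and t1: "typebound k (G1, o1)" and t2: "typebound k (G2, o2)"
  shows "typebound k (hcomp_graph G1 G2, oo)"
proof -
  have fE: "finite (E G1)" using wfD[OF w1] by simp
  have nE: "\<And>e. e + freshn (E G1) \<notin> E G1" using freshn_gt[OF fE] by fastforce
  have a3: "\<forall>e\<in>E G1. src (hcomp_graph G1 G2) e = src G1 e"
    unfolding hcomp_fields by simp
  have a4: "\<forall>e\<in>E G2. src (hcomp_graph G1 G2) (e + freshn (E G1)) = src G2 e + freshn (V G1)"
    unfolding hcomp_fields using nE by simp
  show ?thesis
    by (rule glue_tb[OF w1 w2 t1 t2 _ _ a3 a4]) (simp_all only: hcomp_fields subset_refl)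
qed


lemma expand_fields:
  "V (expand_graph G h0 l) = (V G - {dv G h0}) \<union> {freshn (V G), Suc (freshn (V G))}"
  "E (expand_graph G h0 l) = insert (freshn (E G)) (E G)"
  "src (expand_graph G h0 l) = (\<lambda>e. if e = freshn (E G) then freshn (V G) else if e \<in> E G then
       (if src G e = dv G h0 then (if (e, True) \<in> {(rot G ^^ i) h0 | i. i < l} then freshn (V G)
        else Suc (freshn (V G))) else src G e) else 0)"
  by (simp only: expand_graph_def Let_def rgraph.simps)+

lemma expand_tb:
  assumes wf: "wf_graph G" and tb: "typebound k (G, Or)" and k1: "1 \<le> k"
    and h0: "h0 \<in> darts G" and adm: "admissible_exp d G Or h0 l"
  shows "typebound k (expand_graph G h0 l, Or')"
proof (cases k)
  case infinity
  then show ?thesis unfolding typebound_def by simp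
next
  case (enat K)
  define G' where "G' = expand_graph G h0 l"
  define v where "v = dv G h0"
  define a where "a = freshn (V G)"
  define e0 where "e0 = freshn (E G)"
  define I where "I = {(rot G ^^ i) h0 | i. i < l}"
  have fV: "finite (V G)" and fE: "finite (E G)" and sV: "\<forall>e\<in>E G. src G e \<in> V G \<and> tgt G e \<in> V G"
    using wfD[OF wf] by auto
  have aV: "a \<notin> V G" "Suc a \<notin> V G" using freshn_gt[OF fV] unfolding a_def by fastforce+
  have e0E: "e0 \<notin> E G" using freshn_notin[OF fE] unfolding e0_def by simp
  have vV: "v \<in> V G" using h0 sV unfolding v_def dv_def darts_def by (auto split: if_splits)
  have K1: "1 \<le> K" using k1 enat by (simp add: one_enat_def)
  have bnd: "outdeg G w \<le> K" if "w \<in> V G" for w using tb that enat unfolding typebound_def by simp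
  have VG': "V G' = (V G - {v}) \<union> {a, Suc a}" unfolding G'_def expand_fields v_def a_def by simp
  have EG': "E G' = insert e0 (E G)" unfolding G'_def expand_fields e0_def by simp
  have sG': "src G' = (\<lambda>e. if e = e0 then a else if e \<in> E G then
       (if src G e = v then (if (e, True) \<in> I then a else Suc a) else src G e) else 0)"
    unfolding G'_def expand_fields v_def a_def e0_def I_def by simp
  define Sv where "Sv = {e \<in> E G. src G e = v}"
  define Sa where "Sa = {e \<in> Sv. (e, True) \<in> I}"
  define Sb where "Sb = {e \<in> Sv. (e, True) \<notin> I}"
  have fSv: "finite Sv" using fE unfolding Sv_def by simp
  have cSv: "card Sa + card Sb = card Sv"
  proof -
    have u: "Sv = Sa \<union> Sb" "Sa \<inter> Sb = {}" unfolding Sa_def Sb_def by auto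
    have "finite Sa" "finite Sb" using fSv unfolding Sa_def Sb_def by auto
    then show ?thesis using u card_Un_disjoint by metis
  qed
  have odv: "outdeg G v = card Sv" unfolding outdeg_def Sv_def by simp
  have oth: "outdeg G' w = outdeg G w" if "w \<in> V G" "w \<noteq> v" for w
  proof -
    have "{e \<in> E G'. src G' e = w} = {e \<in> E G. src G e = w}"
      using that aV e0E unfolding EG' sG' by (auto split: if_splits)
    then show ?thesis unfolding outdeg_def by simp
  qed
  have oa: "outdeg G' a = Suc (card Sa)"
  proof -
    have "{e \<in> E G'. src G' e = a} = insert e0 Sa"
      using aV e0E sV unfolding EG' sG' Sa_def Sv_def by (auto split: if_splits)
    moreover have "e0 \<notin> Sa" using e0E unfolding Sa_def Sv_def by simp
    moreover have "finite Sa" using fSv unfolding Sa_def by simp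
    ultimately show ?thesis unfolding outdeg_def by simp
  qed
  have ob: "outdeg G' (Suc a) = card Sb"
  proof -
    have "{e \<in> E G'. src G' e = Suc a} = Sb"
      using aV e0E sV unfolding EG' sG' Sb_def Sv_def by (auto split: if_splits)
    then show ?thesis unfolding outdeg_def by simp
  qed
  have nz: "card Sb \<noteq> 0" if "outdeg G v \<noteq> 0"
  proof
    assume "card Sb = 0"
    then have b0: "outdeg G' (Suc a) = 0" using ob by simp
    have "inputs G \<subseteq> inputs G'"
    proof
      fix w assume "w \<in> inputs G"
      then have w: "w \<in> V G" "outdeg G w = 0" unfolding inputs_def by auto
      then have "w \<noteq> v" using that by auto
      then show "w \<in> inputs G'" using w oth unfolding inputs_def VG' by auto
    qed
    moreover have "Suc a \<in> inputs G'" using b0 unfolding inputs_def VG' by simp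
    moreover have "Suc a \<notin> inputs G" using aV unfolding inputs_def by simp
    ultimately have sub: "insert (Suc a) (inputs G) \<subseteq> inputs G'" by simp
    have "finite (inputs G')" using fV unfolding inputs_def VG' by simp
    then have "card (insert (Suc a) (inputs G)) \<le> card (inputs G')" using sub by (rule card_mono)
    moreover have "finite (inputs G)" using fV unfolding inputs_def by simp
    ultimately have "Suc (card (inputs G)) \<le> card (inputs G')" using \<open>Suc a \<notin> inputs G\<close> by simp
    moreover have "card (inputs G') = card (inputs G)"
      using adm unfolding admissible_exp_def G'_def by simp
    ultimately show False by simp
  qed
  have "enat (outdeg G' w) \<le> k" if w: "w \<in> V G'" for w
  proof -
    have "outdeg G' w \<le> K"
    proof -
      consider "w \<in> V G" "w \<noteq> v" | "w = a" | "w = Suc a" using w VG' by auto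
      then show ?thesis
      proof cases
        case 1 then show ?thesis using oth bnd by simp
      next
        case 2
        show ?thesis
        proof (cases "outdeg G v = 0")
          case True then show ?thesis using cSv odv K1 oa 2 by simp
        next
          case False then show ?thesis using nz[OF False] cSv odv bnd[OF vV] oa 2 by simp
        qed
      next
        case 3 then show ?thesis using cSv odv bnd[OF vV] ob by simp
      qed
    qed
    then show ?thesis using enat by simp
  qed
  then show ?thesis unfolding typebound_def G'_def by simp
qed


lemma relabel_ok:
  assumes wf: "wf_og d x"
    and bs: "bij_betw \<sigma> {..<card (inputs (fst x))} {..<card (inputs (fst x))}"
    and bt: "bij_betw \<tau> {..<card (bcs (fst x))} {..<card (bcs (fst x))}"
  shows "wf_og d (relabel \<sigma> \<tau> x) \<and> typebound k (relabel \<sigma> \<tau> x) = typebound k x"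
proof -
  obtain G Or where x: "x = (G, Or)" by fastforce
  define G' where "G' = G\<lparr>inp := (\<lambda>v. if v \<in> inputs G then \<sigma> (inp G v) else 0),
                             outp := (\<lambda>c. if c \<in> bcs G then \<tau> (outp G c) else 0)\<rparr>"
  have r: "relabel \<sigma> \<tau> x = (G', Or)" unfolding relabel_def x G'_def fst_conv snd_conv ..
  have same: "V G' = V G" "E G' = E G" "src G' = src G" "tgt G' = tgt G" "rot G' = rot G"
    by (simp_all add: G'_def)
  have io: "inp G' = (\<lambda>v. if v \<in> inputs G then \<sigma> (inp G v) else 0)"
    "outp G' = (\<lambda>c. if c \<in> bcs G then \<tau> (outp G c) else 0)" by (simp_all add: G'_def)
  have eq1: "outdeg G' = outdeg G" "indeg G' = indeg G" "darts G' = darts G" "dv G' = dv G"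
    "bphi G' = bphi G"
    by (simp_all add: outdeg_def indeg_def darts_def dv_def bphi_def same fun_eq_iff)
  have eq2: "inputs G' = inputs G" "bcs G' = bcs G" "ogens G' = ogens G"
    by (simp_all add: inputs_def bcs_def ogens_def eq1 same)
  have wfG: "wf_graph G" and wo: "wf_or G Or" using wf unfolding x wf_og_def by auto
  have bi: "bij_betw (inp G) (inputs G) {..<card (inputs G)}"
    and bo: "bij_betw (outp G) (bcs G) {..<card (bcs G)}"
    using wfG unfolding wf_graph_def by auto
  have b1: "bij_betw (inp G') (inputs G) {..<card (inputs G)}"
  proof -
    have "bij_betw (\<sigma> \<circ> inp G) (inputs G) {..<card (inputs G)}"
      using bij_betw_trans[OF bi] bs unfolding x by simp
    then show ?thesis by (rule bij_betw_cong[THEN iffD1, rotated]) (simp add: io)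
  qed
  have b2: "bij_betw (outp G') (bcs G) {..<card (bcs G)}"
  proof -
    have "bij_betw (\<tau> \<circ> outp G) (bcs G) {..<card (bcs G)}"
      using bij_betw_trans[OF bo] bt unfolding x by simp
    then show ?thesis by (rule bij_betw_cong[THEN iffD1, rotated]) (simp add: io)
  qed
  have z1: "\<forall>v. v \<notin> inputs G \<longrightarrow> inp G' v = 0" and z2: "\<forall>b. b \<notin> bcs G \<longrightarrow> outp G' b = 0"
    by (simp_all add: io)
  have "wf_graph G'"
    unfolding wf_graph_def eq1 eq2 same
    apply (insert wfG[unfolded wf_graph_def] b1 b2 z1 z2)
    apply (elim conjE)
    apply (intro conjI)
                 apply assumption+
    done
  moreover have "wf_or G' Or" using wo unfolding wf_or_def eq2 .
  ultimately show ?thesis unfolding wf_og_def typebound_def r by (simp add: x same eq1)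
qed

lemma idgraph_ok: "wf_og d idgraph \<and> typebound k idgraph"
proof -
  let ?G = "fst idgraph"
  have o: "outdeg ?G = (\<lambda>_. 0)" "indeg ?G = (\<lambda>_. 0)"
    by (simp_all add: idgraph_def outdeg_def indeg_def fun_eq_iff)
  have dd: "darts ?G = {}" by (simp add: idgraph_def darts_def)
  have i: "inputs ?G = {0}" unfolding inputs_def o by (simp add: idgraph_def)
  have b: "bcs ?G = {Iso 0}" unfolding bcs_def dd by (simp add: idgraph_def)
  have og: "ogens ?G = {}" unfolding ogens_def o by (simp add: idgraph_def)
  have "wf_graph ?G"
    unfolding wf_graph_def i b o dd by (simp add: idgraph_def bij_betw_def lessThan_Suc)
  moreover have "wf_or ?G (snd idgraph)" unfolding wf_or_def og by (simp add: idgraph_def)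
  ultimately show ?thesis unfolding wf_og_def typebound_def by (simp add: o zero_enat_def[symmetric])
qed


lemma DGk_mono: "k \<le> k' \<Longrightarrow> DGk d k \<subseteq> DGk d k'"
  unfolding DGk_def typebound_def
  by (rule lin_span_mono) (auto intro: order_trans)

lemma DGk_base: "wf_og d x \<Longrightarrow> typebound k x \<Longrightarrow> delta x \<in> DGk d k"
  unfolding DGk_def by (rule lin_span_base) blast

lemma dbasis_in:
  assumes wf: "wf_og d x" and tb: "typebound k x" and k1: "1 \<le> k"
  shows "dbasis d x \<in> DGk d k"
proof -
  obtain G Or where x: "x = (G, Or)" by fastforce
  have wfG: "wf_graph G" using wf unfolding x wf_og_def by simp
  have tbG: "typebound k (G, Or)" using tb x by simp
  define P where "P = {(h0, l). h0 \<in> darts G \<and> l \<le> card (vdarts G (dv G h0))}"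
  have fd: "finite (darts G)" using wfD[OF wfG] unfolding darts_def by simp
  have "P \<subseteq> darts G \<times> {..card (darts G)}"
  proof
    fix p assume "p \<in> P"
    then obtain h0 l where p: "p = (h0, l)" "h0 \<in> darts G" "l \<le> card (vdarts G (dv G h0))"
      unfolding P_def by blast
    have "card (vdarts G (dv G h0)) \<le> card (darts G)"
      using fd by (intro card_mono) (auto simp: vdarts_def)
    then show "p \<in> darts G \<times> {..card (darts G)}" using p by auto
  qed
  then have fP: "finite P" using fd by (meson finite_SigmaI finite_atMost finite_subset)
  define c :: "dart \<times> nat \<Rightarrow> 'a" where
    "c p = (-1) ^ expand_sign_exp d G Or (dv G (fst p))" for p
  define h :: "dart \<times> nat \<Rightarrow> ograph \<Rightarrow> 'a" where
    "h p = (if admissible_exp d G Or (fst p) (snd p)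
            then delta (expand_graph G (fst p) (snd p), expand_or G Or (fst p) (snd p)) else (\<lambda>_. 0))" for p
  have "dbasis d x = (\<lambda>y. \<Sum>p\<in>P. c p * h p y)"
    unfolding dbasis_def x fst_conv snd_conv P_def c_def h_def
    by (rule ext, rule sum.cong) auto
  also have "\<dots> \<in> DGk d k" unfolding DGk_def
  proof (rule lin_span_sum[OF fP], rule ballI)
    fix p assume p: "p \<in> P"
    show "h p \<in> lin_span ({delta x |x. wf_og d x \<and> typebound k x} \<union> Rel d)"
    proof (cases "admissible_exp d G Or (fst p) (snd p)")
      case True
      have h0: "fst p \<in> darts G" using p unfolding P_def by auto
      have "wf_og d (expand_graph G (fst p) (snd p), expand_or G Or (fst p) (snd p))"
        using True unfolding admissible_exp_def by simp
      moreover have "typebound k (expand_graph G (fst p) (snd p), expand_or G Or (fst p) (snd p))"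
        by (rule expand_tb[OF wfG tbG k1 h0 True])
      ultimately show ?thesis using True unfolding h_def
        using DGk_base[unfolded DGk_def] by simp
    next
      case False
      then show ?thesis unfolding h_def using lin_span_zero by simp
    qed
  qed
  finally show ?thesis .
qed

lemma giso_wf_or:
  assumes wf: "wf_graph G" and gi: "giso G G' fv fe" and wo: "wf_or G Or"
  shows "wf_or G' (map (gmap fv fe) Or)"
proof -
  have bv: "bij_betw fv (V G) (V G')" and be: "bij_betw fe (E G) (E G')"
    using gi unfolding giso_def by auto
  have iv: "inj_on fv (V G)" and ie: "inj_on fe (E G)"
    using bv be by (auto simp: bij_betw_def)
  have VG': "V G' = fv ` V G" and EG': "E G' = fe ` E G" using bv be by (auto simp: bij_betw_def)
  have inj: "inj_on (gmap fv fe) (ogens G)"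
  proof (rule inj_onI)
    fix g1 g2 assume g: "g1 \<in> ogens G" "g2 \<in> ogens G" "gmap fv fe g1 = gmap fv fe g2"
    show "g1 = g2"
      using g iv ie unfolding ogens_def gmap_def by (auto dest: inj_onD)
  qed
  have "fv ` {v \<in> V G. outdeg G v \<noteq> 0} = {w \<in> V G'. outdeg G' w \<noteq> 0}"
    using giso_outdeg[OF wf gi] unfolding VG' by auto
  then have img: "gmap fv fe ` ogens G = ogens G'"
    unfolding ogens_def gmap_def EG' image_Un image_image by (simp add: image_image[symmetric, of GV fv])
  show ?thesis using wo inj img unfolding wf_or_def by (simp add: distinct_map)
qed

lemma gen_support:
  assumes "g \<in> {delta x | x. wf_og d x \<and> typebound k x} \<union> Rel d"
  shows "finite {y. g y \<noteq> 0} \<and> (\<forall>y. g y \<noteq> 0 \<longrightarrow> wf_og d y)"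
proof -
  consider (D) x where "g = delta x" "wf_og d x"
    | (c1) G Or Or' where "g = (\<lambda>y. delta (G, Or') y - (-1) ^ kinv d G Or Or' * delta (G, Or) y)"
        "wf_og d (G, Or)" "wf_or G Or'"
    | (c2) G G' Or fv fe where "g = (\<lambda>y. delta (G', map (gmap fv fe) Or) y - delta (G, Or) y)"
        "wf_og d (G, Or)" "wf_graph G'" "giso G G' fv fe"
    using assms unfolding Rel_def by blast
  then show ?thesis
  proof cases
    case D
    have "{y. g y \<noteq> 0} \<subseteq> {x}" using D by (auto dest: delta_nz)
    then show ?thesis using D finite_subset by (auto dest: delta_nz)
  next
    case c1
    have s: "{y. g y \<noteq> 0} \<subseteq> {(G, Or'), (G, Or)}" using c1 by (auto simp: delta_def)
    have "wf_og d (G, Or')" using c1 unfolding wf_og_def by simp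
    then show ?thesis using s c1 finite_subset by blast
  next
    case c2
    have s: "{y. g y \<noteq> 0} \<subseteq> {(G', map (gmap fv fe) Or), (G, Or)}" using c2 by (auto simp: delta_def)
    have "wf_or G' (map (gmap fv fe) Or)"
      using giso_wf_or c2 unfolding wf_og_def by auto
    then have "wf_og d (G', map (gmap fv fe) Or)" using c2 unfolding wf_og_def by simp
    then show ?thesis using s c2 finite_subset by blast
  qed
qed

lemma DG_support:
  assumes "f \<in> DGk d k"
  shows "finite {y. f y \<noteq> 0} \<and> (\<forall>y. f y \<noteq> 0 \<longrightarrow> wf_og d y)"
proof -
  obtain T c where t: "finite T" "T \<subseteq> {delta x | x. wf_og d x \<and> typebound k x} \<union> Rel d"
     "f = (\<lambda>y. \<Sum>g\<in>T. c g * g y)"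
    using assms unfolding DGk_def lin_span_def by blast
  have gs: "\<forall>g\<in>T. finite {y. g y \<noteq> 0} \<and> (\<forall>y. g y \<noteq> 0 \<longrightarrow> wf_og d y)"
    using t(2) gen_support by blast
  have sub: "{y. f y \<noteq> 0} \<subseteq> (\<Union>g\<in>T. {y. g y \<noteq> 0})"
  proof
    fix y assume "y \<in> {y. f y \<noteq> 0}"
    then have "(\<Sum>g\<in>T. c g * g y) \<noteq> 0" using t(3) by simp
    then obtain g where "g \<in> T" "c g * g y \<noteq> 0" by (meson sum.neutral)
    then show "y \<in> (\<Union>g\<in>T. {y. g y \<noteq> 0})" by auto
  qed
  have "finite (\<Union>g\<in>T. {y. g y \<noteq> 0})" using t(1) gs by (intro finite_UN_I) auto
  then have f1: "finite {y. f y \<noteq> 0}" using sub by (rule finite_subset[rotated])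
  have "wf_og d y" if "f y \<noteq> 0" for y
  proof -
    from that sub obtain g where "g \<in> T" "g y \<noteq> 0" by blast
    then show ?thesis using gs by blast
  qed
  then show ?thesis using f1 by blast
qed

lemma finite_delta_sum:
  assumes fY: "finite Y" and all: "\<forall>z\<in>Y. wf_og d z \<and> typebound k z"
  shows "(\<lambda>y. if y \<in> Y then 1 else 0) \<in> (DGk d k :: (ograph \<Rightarrow> 'a::field) set)"
proof -
  have "(\<lambda>y. if y \<in> Y then (1::'a) else 0) = (\<lambda>y. \<Sum>z\<in>Y. 1 * delta z y)"
    unfolding delta_def using fY by (auto simp: sum.delta)
  also have "\<dots> \<in> DGk d k"
    unfolding DGk_def by (rule lin_span_sum[OF fY]) (use all DGk_base[unfolded DGk_def] in blast)
  finally show ?thesis .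
qed

lemma vh_in:
  assumes h: "wf_og d x1 \<and> typebound k x1 \<and> wf_og d x2 \<and> typebound k x2"
  shows "((vcomp x1 x2 :: ograph \<Rightarrow> 'k::field) \<in> DGk d \<infinity> \<longrightarrow> vcomp x1 x2 \<in> DGk d k) \<and>
                 ((delta (hcomp x1 x2) :: ograph \<Rightarrow> 'k::field) \<in> DGk d \<infinity> \<longrightarrow>
                    delta (hcomp x1 x2) \<in> DGk d k)"
proof (intro conjI impI)
  have w1: "wf_graph (fst x1)" and w2: "wf_graph (fst x2)" using h unfolding wf_og_def by auto
  have t1: "typebound k (fst x1, snd x1)" and t2: "typebound k (fst x2, snd x2)" using h by auto
  {
    assume a: "(vcomp x1 x2 :: ograph \<Rightarrow> 'k::field) \<in> DGk d \<infinity>"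
    define Y where "Y = {y. (vcomp x1 x2 :: ograph \<Rightarrow> 'k::field) y \<noteq> 0}"
    have sY: "finite Y" "\<forall>y\<in>Y. wf_og d y" using DG_support[OF a] unfolding Y_def by auto
    have tY: "\<forall>y\<in>Y. typebound k y"
    proof
      fix y assume "y \<in> Y"
      then have "vcomp_graph (fst x1) (fst x2) (fst y)" unfolding Y_def vcomp_def by (auto split: if_splits)
      then have "typebound k (fst y, snd y)" by (rule vcomp_tb[OF w1 w2 t1 t2])
      then show "typebound k y" by simp
    qed
    have eq: "vcomp x1 x2 = (\<lambda>y. if y \<in> Y then 1 else 0)"
      unfolding Y_def vcomp_def by (rule ext) simp
    show "vcomp x1 x2 \<in> DGk d k" unfolding eq using finite_delta_sum sY tY by blast
  }
  {
    assume a: "(delta (hcomp x1 x2) :: ograph \<Rightarrow> 'k::field) \<in> DGk d \<infinity>"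
    have "(delta (hcomp x1 x2) :: ograph \<Rightarrow> 'k::field) (hcomp x1 x2) \<noteq> 0" by (simp add: delta_def)
    then have wfh: "wf_og d (hcomp x1 x2)" using DG_support[OF a] by blast
    have "typebound k (hcomp_graph (fst x1) (fst x2), snd (hcomp x1 x2))"
      by (rule hcomp_tb[OF w1 w2 t1 t2])
    then have "typebound k (hcomp x1 x2)" unfolding hcomp_def by simp
    then show "delta (hcomp x1 x2) \<in> DGk d k" using wfh DGk_base by blast
  }
qed

theorem mainTheorem2:
  fixes d :: int
  shows "(\<forall>k::nat. 1 \<le> k \<longrightarrow>
            (DGk d (enat k) :: (ograph \<Rightarrow> 'k::field) set) \<subseteq> DGk d (enat (Suc k)) \<and>
            (DGk d (enat k) :: (ograph \<Rightarrow> 'k::field) set) \<subseteq> DGk d \<infinity>) \<and>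
         (\<forall>k::enat. 1 \<le> k \<longrightarrow>
            (\<forall>x. wf_og d x \<and> typebound k x \<longrightarrow>
                 (dbasis d x :: ograph \<Rightarrow> 'k::field) \<in> DGk d k \<and>
                 (\<forall>\<sigma> \<tau>. bij_betw \<sigma> {..<card (inputs (fst x))} {..<card (inputs (fst x))} \<and>
                        bij_betw \<tau> {..<card (bcs (fst x))} {..<card (bcs (fst x))} \<longrightarrow>
                        (delta (relabel \<sigma> \<tau> x) :: ograph \<Rightarrow> 'k::field) \<in> DGk d k)) \<and>
            (\<forall>x1 x2. wf_og d x1 \<and> typebound k x1 \<and> wf_og d x2 \<and> typebound k x2 \<longrightarrow>
                 ((vcomp x1 x2 :: ograph \<Rightarrow> 'k::field) \<in> DGk d \<infinity> \<longrightarrow> vcomp x1 x2 \<in> DGk d k) \<and>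
                 ((delta (hcomp x1 x2) :: ograph \<Rightarrow> 'k::field) \<in> DGk d \<infinity> \<longrightarrow>
                    delta (hcomp x1 x2) \<in> DGk d k)) \<and>
            (delta idgraph :: ograph \<Rightarrow> 'k::field) \<in> DGk d k)"
  apply (intro conjI allI impI)
        apply (rule DGk_mono; simp)
       apply (rule DGk_mono; simp)
      apply (elim conjE, erule (1) dbasis_in, assumption)
     apply (elim conjE)
     apply (rule DGk_base)
      apply (simp add: relabel_ok)
     apply (simp add: relabel_ok)
    apply (drule vh_in, elim conjE, erule (1) mp)
   apply (drule vh_in, elim conjE, erule (1) mp)
  apply (rule DGk_base; simp add: idgraph_ok)
  done

end
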